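(* Let $P$ be a finite semipure poset of length $n$ with a unique minimum element $\hat 0$, $t\ge1$, $\lambda_P:\mathrm{Cov}(\hat P)\to L_P$ an EL-labeling, $\lambda$ the induced EL-labeling of $\widehat{P*T_{t,n}}$ restricted to $(P*T_{t,n})^+=[(\hat 0,\hat 0_T),\hat 1]$, and $m\in\mathbb N$. Then the number of ascent free maximal chains of $(P*T_{t,n})^+$ of length $m+1$ equals $$\sum_{\substack{w\in\mathrm{NDA}_{m+1}(L_P)\\ w_m\not\le w_{m+1}}} c(w)\,t^{\mathrm{asc}(w)}(1+t)^{m-2\,\mathrm{asc}(w)}+\sum_{\substack{w\in\mathrm{NDA}_{m+1}(L_P)\\ w_m\le w_{m+1}}} c(w)\,t^{\mathrm{asc}(w)}(1+t)^{m+1-2\,\mathrm{asc}(w)},$$ where $c(w)$ is the number of maximal chains of $P^+$ (the interval $[\hat 0,\hat 1_P]$ of $\hat P$) of length $m+1$ whose label sequence under $\lambda_P$ is $w$.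
   Context: Rees product $P*Q$ of semipure posets (rank $r_P(x)$ = common length of maximal chains of $P_{\le x}$): the set $\{(p,q): r_P(p)\ge r_Q(q)\}$ with $(p_1,q_1)\le(p_2,q_2)$ iff $p_1\le p_2$, $q_1\le q_2$, $r_P(p_2)-r_P(p_1)\ge r_Q(q_2)-r_Q(q_1)$. $T_{t,n}$: sequences over $\{1,\dots,t\}$ of length $\le n$ ordered by prefix, minimum $\hat 0_T$, rank = length. $\hat Q$: $Q$ with a new minimum and new maximum adjoined (even if $Q$ already has them); for $\hat P$ these are $\hat 0_P,\hat 1_P$. $Q^+$: $Q$ with a new maximum adjoined. An edge labeling $\lambda:\mathrm{Cov}(Q)\to L$ of a bounded poset is an EL-labeling if each interval $[x,y]$ has a unique maximal chain with weakly increasing labels and its label sequence lexicographically precedes those of all other maximal chains of $[x,y]$. The induced labeling $\lambda$ of $\widehat{P*T_{t,n}}$ takes values in $L_P\times\{0<1\}$ (product order): the minimum is identified with $(\hat 0_P,\hat 0_T)$; for a cover $(x,k)\lessdot(y,l)$ with $(y,l)\ne\hat 1$, $\lambda=(\lambda_P(x,y),1)$ if $k<l$ and $(\lambda_P(x,y),0)$ if $k=l$; for $(x,k)\lessdot\hat 1$, $\lambda=(\lambda_P(x,\hat 1_P),0)$. A maximal chain is ascent free if no two consecutive labels $a,b$ satisfy $a\le b$. For a word $w$ of length $N$ over a poset $A$: $i\in[N-1]$ is an ascent if $w_i\le w_{i+1}$; $\mathrm{asc}(w)$ counts ascents; a double ascent is $i\in[N-2]$ with $w_i\le w_{i+1}\le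 w_{i+2}$; $\mathrm{NDA}_N(A)$ is the set of length-$N$ words over $A$ without double ascents. *)

theory Defs
  imports Main "HOL-Library.Sublist" "HOL-Library.Groups_Big_Fun"
begin

datatype 'a ext = Bot | Elem 'a | Top

fun le_ext :: "('a \<Rightarrow> 'a \<Rightarrow> bool) \<Rightarrow> 'a ext \<Rightarrow> 'a ext \<Rightarrow> bool" where
  "le_ext le Bot _ = True"
| "le_ext le _ Top = True"
| "le_ext le (Elem a) (Elem b) = le a b"
| "le_ext le _ _ = False"

definition hat_carrier :: "'a set \<Rightarrow> 'a ext set" where
  "hat_carrier S = insert Bot (insert Top (Elem ` S))"

definition is_chain :: "'a set \<Rightarrow> ('a \<Rightarrow> 'a \<Rightarrow> bool) \<Rightarrow> 'a set \<Rightarrow> bool" where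
  "is_chain S le C \<longleftrightarrow> C \<subseteq> S \<and> (\<forall>x\<in>C. \<forall>y\<in>C. le x y \<or> le y x)"

definition is_maxchain :: "'a set \<Rightarrow> ('a \<Rightarrow> 'a \<Rightarrow> bool) \<Rightarrow> 'a set \<Rightarrow> bool" where
  "is_maxchain S le C \<longleftrightarrow> is_chain S le C \<and> (\<forall>D. is_chain S le D \<and> C \<subseteq> D \<longrightarrow> D = C)"

definition below :: "'a::order set \<Rightarrow> 'a \<Rightarrow> 'a set" where
  "below P x = {y\<in>P. y \<le> x}"

definition semipure :: "'a::order set \<Rightarrow> bool" where
  "semipure P \<longleftrightarrow> (\<forall>x\<in>P. \<forall>C D. is_maxchain (below P x) (\<le>) C \<and> is_maxchain (below P x) (\<le>) D
       \<longrightarrow> card C = card D)"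

definition rank :: "'a::order set \<Rightarrow> 'a \<Rightarrow> nat" where
  "rank P x = card (SOME C. is_maxchain (below P x) (\<le>) C) - 1"

definition poset_length :: "'a::order set \<Rightarrow> nat" where
  "poset_length P = Max {card C - 1 | C. is_chain P (\<le>) C}"

definition covers :: "'b set \<Rightarrow> ('b \<Rightarrow> 'b \<Rightarrow> bool) \<Rightarrow> 'b \<Rightarrow> 'b \<Rightarrow> bool" where
  "covers S le x y \<longleftrightarrow> x \<in> S \<and> y \<in> S \<and> x \<noteq> y \<and> le x y \<and>
      (\<forall>z\<in>S. le x z \<and> le z y \<longrightarrow> z = x \<or> z = y)"

(* maximal chains x = c_0 \<lessdot> c_1 \<lessdot> ... \<lessdot> c_k = y of the interval [x,y]; length = k *)
definition max_chains_interval :: "'b set \<Rightarrow> ('b \<Rightarrow> 'b \<Rightarrow> bool) \<Rightarrow> 'b \<Rightarrow> 'b \<Rightarrow> 'b list set" where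
  "max_chains_interval S le x y =
     {c. c \<noteq> [] \<and> hd c = x \<and> last c = y \<and>
         (\<forall>i. Suc i < length c \<longrightarrow> covers S le (c ! i) (c ! Suc i))}"

definition labels :: "('b \<Rightarrow> 'b \<Rightarrow> 'l) \<Rightarrow> 'b list \<Rightarrow> 'l list" where
  "labels lam c = map (\<lambda>i. lam (c ! i) (c ! Suc i)) [0..<length c - 1]"

definition weakly_incr :: "'l::order list \<Rightarrow> bool" where
  "weakly_incr w \<longleftrightarrow> (\<forall>i. Suc i < length w \<longrightarrow> w ! i \<le> w ! Suc i)"

definition lex_prec :: "'l::order list \<Rightarrow> 'l list \<Rightarrow> bool" where
  "lex_prec v w \<longleftrightarrow> strict_prefix v w \<or>
     (\<exists>i. i < length v \<and> i < length w \<and> take i v = take i w \<and> v ! i < w ! i)"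

definition EL_labeling :: "'b set \<Rightarrow> ('b \<Rightarrow> 'b \<Rightarrow> bool) \<Rightarrow> ('b \<Rightarrow> 'b \<Rightarrow> 'l::order) \<Rightarrow> bool" where
  "EL_labeling S le lam \<longleftrightarrow>
     (\<forall>x\<in>S. \<forall>y\<in>S. le x y \<longrightarrow>
        (\<exists>!c. c \<in> max_chains_interval S le x y \<and> weakly_incr (labels lam c)) \<and>
        (\<forall>c\<in>max_chains_interval S le x y. weakly_incr (labels lam c) \<longrightarrow>
           (\<forall>c'\<in>max_chains_interval S le x y. c' \<noteq> c \<longrightarrow> lex_prec (labels lam c) (labels lam c'))))"

definition Tseq :: "nat \<Rightarrow> nat \<Rightarrow> nat list set" where
  "Tseq t n = {s. set s \<subseteq> {1..t} \<and> length s \<le> n}"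

definition rees_carrier :: "'a::order set \<Rightarrow> nat \<Rightarrow> nat \<Rightarrow> ('a \<times> nat list) set" where
  "rees_carrier P t n = {(p, s). p \<in> P \<and> s \<in> Tseq t n \<and> rank P p \<ge> length s}"

definition rees_le :: "'a::order set \<Rightarrow> ('a \<times> nat list) \<Rightarrow> ('a \<times> nat list) \<Rightarrow> bool" where
  "rees_le P a b \<longleftrightarrow> fst a \<le> fst b \<and> prefix (snd a) (snd b) \<and>
     int (rank P (fst b)) - int (rank P (fst a)) \<ge> int (length (snd b)) - int (length (snd a))"

(* induced labeling of \<hat>(P * T_{t,n}) with values in L_P \<times> {0<1} (False = 0, True = 1);
   the new minimum Bot is identified with (\<hat>0_P, \<hat>0_T) = (Bot, []) *)
fun induced_lab :: "('a ext \<Rightarrow> 'a ext \<Rightarrow> 'l) \<Rightarrow> ('a \<times> nat list) ext \<Rightarrow> ('a \<times> nat list) ext \<Rightarrow> 'l \<times> bool" where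
  "induced_lab lamP (Elem (x, k)) (Elem (y, l)) = (lamP (Elem x) (Elem y), strict_prefix k l)"
| "induced_lab lamP Bot (Elem (y, l)) = (lamP Bot (Elem y), strict_prefix [] l)"
| "induced_lab lamP (Elem (x, k)) Top = (lamP (Elem x) Top, False)"
| "induced_lab lamP Bot Top = (lamP Bot Top, False)"
| "induced_lab lamP _ _ = undefined"

definition le_lab :: "'l::order \<times> bool \<Rightarrow> 'l \<times> bool \<Rightarrow> bool" where
  "le_lab a b \<longleftrightarrow> fst a \<le> fst b \<and> snd a \<le> snd b"

definition ascent_free :: "('l \<Rightarrow> 'l \<Rightarrow> bool) \<Rightarrow> 'l list \<Rightarrow> bool" where
  "ascent_free le w \<longleftrightarrow> \<not> (\<exists>i. Suc i < length w \<and> le (w ! i) (w ! Suc i))"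

definition asc :: "'l::order list \<Rightarrow> nat" where
  "asc w = card {i. Suc i < length w \<and> w ! i \<le> w ! Suc i}"

definition NDA :: "nat \<Rightarrow> 'l::order list set" where
  "NDA N = {w. length w = N \<and>
     \<not> (\<exists>i. i + 2 < length w \<and> w ! i \<le> w ! (i + 1) \<and> w ! (i + 1) \<le> w ! (i + 2))}"

definition chain_count :: "'a::order set \<Rightarrow> 'a \<Rightarrow> ('a ext \<Rightarrow> 'a ext \<Rightarrow> 'l) \<Rightarrow> nat \<Rightarrow> 'l list \<Rightarrow> nat" where
  "chain_count P z lamP N w =
     card {c \<in> max_chains_interval (hat_carrier P) (le_ext (\<le>)) (Elem z) Top.
             length c = N + 1 \<and> labels lamP c = w}"

end

theory Submission
  imports Defs "HOL-Library.FuncSet"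
begin



lemma cov_hat_EE: "covers (hat_carrier S) (le_ext le) (Elem a) (Elem b) \<longleftrightarrow> covers S le a b"
  unfolding covers_def hat_carrier_def by auto

lemma cov_hat_ET: "covers (hat_carrier S) (le_ext le) (Elem a) Top \<longleftrightarrow> a \<in> S \<and> (\<forall>b\<in>S. le a b \<longrightarrow> b = a)"
  unfolding covers_def hat_carrier_def by auto

lemma cov_hat_Bot: "\<not> covers (hat_carrier S) (le_ext le) x Bot"
  unfolding covers_def by (cases x) auto

lemma cov_hat_Top: "\<not> covers (hat_carrier S) (le_ext le) Top y"
  unfolding covers_def by (cases y) auto

lemma maxchain_ext:
  assumes "finite S" "is_chain S le C"
  shows "\<exists>D. is_maxchain S le D \<and> C \<subseteq> D"
proof -
  let ?K = "{D. is_chain S le D \<and> C \<subseteq> D}"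
  have fin: "finite ?K" using assms(1) by (rule finite_subset[rotated, OF finite_Pow_iff[THEN iffD2]]) (auto simp: is_chain_def)
  have ne: "C \<in> ?K" using assms by auto
  have "Max (card ` ?K) \<in> card ` ?K" using fin ne by (intro Max_in) auto
  then obtain D where D: "D \<in> ?K" "card D = Max (card ` ?K)" by (metis (no_types, lifting) imageE)
  have "is_maxchain S le D"
    unfolding is_maxchain_def
  proof (intro conjI allI impI)
    show "is_chain S le D" using D by auto
    fix D' assume h: "is_chain S le D' \<and> D \<subseteq> D'"
    then have "D' \<in> ?K" using D by auto
    then have "card D' \<le> card D" using D fin by (simp add: Max_ge)
    moreover have "finite D'" using h assms(1) by (meson finite_subset is_chain_def)
    ultimately show "D' = D" using h by (metis card_subset_eq antisym card_mono)
  qed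
  then show ?thesis using D by auto
qed




locale RS =
  fixes P :: "'a::order set" and z :: 'a and t n m :: nat
  assumes finP: "finite P" and semi: "semipure P" and zP: "z \<in> P"
    and nlen: "n = poset_length P"
begin

lemma maxchain_chain: "is_maxchain S le C \<Longrightarrow> is_chain S le C"
  unfolding is_maxchain_def by simp

lemma below_fin: "finite (below P x)" using finP unfolding below_def by auto

lemma ex_maxchain: "\<exists>C. is_maxchain (below P x) (\<le>) C"
proof -
  have "is_chain (below P x) (\<le>) {}" by (simp add: is_chain_def)
  then show ?thesis using maxchain_ext[OF below_fin] by blast
qed

lemma rank_eq:
  assumes "x \<in> P" "is_maxchain (below P x) (\<le>) C"
  shows "rank P x = card C - 1"
proof -
  have "is_maxchain (below P x) (\<le>) (SOME C. is_maxchain (below P x) (\<le>) C)" using ex_maxchain by (rule someI_ex)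
  then show ?thesis using semi assms unfolding semipure_def rank_def by metis
qed

lemma in_maxchain:
  assumes "x \<in> P" "is_maxchain (below P x) (\<le>) C"
  shows "x \<in> C"
proof -
  have "is_chain (below P x) (\<le>) (insert x C)"
    using assms maxchain_chain[OF assms(2)] unfolding is_chain_def below_def by auto
  then show ?thesis using assms(2) unfolding is_maxchain_def by blast
qed

lemma rank_mono:
  assumes "x \<in> P" "y \<in> P" "x \<le> y"
  shows "rank P x \<le> rank P y"
proof -
  obtain C where C: "is_maxchain (below P x) (\<le>) C" using ex_maxchain by blast
  have "is_chain (below P y) (\<le>) C" using maxchain_chain[OF C] assms unfolding is_chain_def below_def
    by auto
  then obtain D where D: "is_maxchain (below P y) (\<le>) D" "C \<subseteq> D"
    using maxchain_ext[OF below_fin] by blast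
  have "finite D" using maxchain_chain[OF D(1)] below_fin unfolding is_chain_def by (meson finite_subset)
  then have "card C \<le> card D" using D card_mono by blast
  then show ?thesis using rank_eq[OF assms(1) C] rank_eq[OF assms(2) D(1)] by simp
qed

lemma rank_cover:
  assumes "covers P (\<le>) x y"
  shows "rank P y = Suc (rank P x)"
proof -
  have xy: "x \<in> P" "y \<in> P" "x \<noteq> y" "x \<le> y" and btw: "\<forall>u\<in>P. x \<le> u \<and> u \<le> y \<longrightarrow> u = x \<or> u = y"
    using assms unfolding covers_def by auto
  obtain C where C: "is_maxchain (below P x) (\<le>) C" using ex_maxchain by blast
  have xC: "x \<in> C" using in_maxchain[OF xy(1) C] .
  have Cb: "C \<subseteq> below P x" using maxchain_chain[OF C] unfolding is_chain_def by auto
  have finC: "finite C" using Cb below_fin finite_subset by blast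
  have yC: "y \<notin> C" using Cb xy unfolding below_def by auto
  have "is_maxchain (below P y) (\<le>) (insert y C)"
    unfolding is_maxchain_def
  proof (intro conjI allI impI)
    show "is_chain (below P y) (\<le>) (insert y C)"
      using maxchain_chain[OF C] Cb xy unfolding is_chain_def below_def by auto
    fix D assume D: "is_chain (below P y) (\<le>) D \<and> insert y C \<subseteq> D"
    have "D - {y} \<subseteq> below P x"
    proof
      fix d assume d: "d \<in> D - {y}"
      then have "d \<in> P" "d \<le> y" "d \<le> x \<or> x \<le> d" using D xC unfolding is_chain_def below_def by auto
      then show "d \<in> below P x" using btw d unfolding below_def by auto
    qed
    moreover have "is_chain (below P x) (\<le>) (D - {y})"
      using D \<open>D - {y} \<subseteq> below P x\<close> unfolding is_chain_def by auto
    moreover have "C \<subseteq> D - {y}" using D yC by auto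
    ultimately have "D - {y} = C" using C unfolding is_maxchain_def by blast
    then show "D = insert y C" using D by auto
  qed
  then have "rank P y = card (insert y C) - 1" using rank_eq xy by blast
  also have "\<dots> = card C" using finC yC by simp
  also have "card C = Suc (rank P x)" using rank_eq[OF xy(1) C] xC finC
    by (metis Suc_diff_1 card_gt_0_iff empty_iff)
  finally show ?thesis .
qed

lemma rank_le_n:
  assumes "x \<in> P"
  shows "rank P x \<le> n"
proof -
  obtain C where C: "is_maxchain (below P x) (\<le>) C" using ex_maxchain by blast
  have ch: "is_chain P (\<le>) C" using maxchain_chain[OF C] unfolding is_chain_def below_def by auto
  have fin: "finite {card C - 1 | C. is_chain P (\<le>) C}"
  proof -
    have "{card C - 1 | C. is_chain P (\<le>) C} \<subseteq> (\<lambda>C. card C - 1) ` Pow P"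
      unfolding is_chain_def by auto
    then show ?thesis using finP finite_subset by blast
  qed
  have "card C - 1 \<le> poset_length P" unfolding poset_length_def
    using ch fin by (intro Max_ge) auto
  then show ?thesis using rank_eq[OF assms C] nlen by simp
qed

end



lemma prefix_len_eq: "prefix k q \<Longrightarrow> length q \<le> length k \<Longrightarrow> q = k"
  by (auto simp: prefix_def)

context RS begin

abbreviation "R \<equiv> rees_carrier P t n"

lemma rc_iff: "(p,s) \<in> R \<longleftrightarrow> p\<in>P \<and> set s \<subseteq> {1..t} \<and> length s \<le> n \<and> length s \<le> rank P p"
  by (auto simp: rees_carrier_def Tseq_def)

lemma rees_le_iff: "rees_le P (x,k) (y,l) \<longleftrightarrow> x \<le> y \<and> prefix k l \<and>
   int (length l) - int (length k) \<le> int (rank P y) - int (rank P x)"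
  by (simp add: rees_le_def)

lemma rees_cover_char:
  assumes "covers R (rees_le P) (x,k) (y,l)"
  shows "covers P (\<le>) x y \<and> (\<exists>e. l = k @ e \<and> (e = [] \<or> (\<exists>a. e = [a] \<and> a \<in> {1..t})))"
proof -
  have A: "(x,k) \<in> R" "(y,l) \<in> R" "(x,k) \<noteq> (y,l)" "rees_le P (x,k) (y,l)"
    and btw: "\<forall>w\<in>R. rees_le P (x,k) w \<and> rees_le P w (y,l) \<longrightarrow> w = (x,k) \<or> w = (y,l)"
    using assms unfolding covers_def by auto
  have xP: "x \<in> P" and yP: "y \<in> P" and lk: "length k \<le> rank P x" and sl: "set l \<subseteq> {1..t}"
    using A(1,2) by (auto simp: rc_iff)
  have xy: "x \<le> y" and pk: "prefix k l" and rd: "int (length l) - int (length k) \<le> int (rank P y) - int (rank P x)"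
    using A(4) by (auto simp: rees_le_iff)
  obtain r where l: "l = k @ r" using pk prefix_def by blast
  have rd': "length r + rank P x \<le> rank P y" using rd l by simp
  have xney: "x \<noteq> y"
  proof
    assume "x = y"
    then have "r = []" using rd' by simp
    then show False using A(3) l \<open>x = y\<close> by simp
  qed
  have cov: "covers P (\<le>) x y"
    unfolding covers_def
  proof (intro conjI ballI impI xP yP xney xy)
    fix u assume uP: "u \<in> P" and u: "x \<le> u \<and> u \<le> y"
    show "u = x \<or> u = y"
    proof (rule ccontr)
      assume un: "\<not> (u = x \<or> u = y)"
      define j where "j = min (length r) (rank P u - rank P x)"
      define q where "q = k @ take j r"
      have m1: "rank P x \<le> rank P u" using rank_mono xP uP u by blast
      have m2: "rank P u \<le> rank P y" using rank_mono yP uP u by blast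
      have lq: "length q = length k + j" unfolding q_def j_def by simp
      have "(u,q) \<in> R"
        unfolding rc_iff
      proof (intro conjI uP)
        show "set q \<subseteq> {1..t}" using sl l unfolding q_def by (auto dest: in_set_takeD)
        show "length q \<le> rank P u" using lq lk m1 unfolding j_def by linarith
        then show "length q \<le> n" using rank_le_n[OF uP] by linarith
      qed
      moreover have "rees_le P (x,k) (u,q)"
        unfolding rees_le_iff q_def using u m1 unfolding j_def by auto
      moreover have "rees_le P (u,q) (y,l)"
        unfolding rees_le_iff
      proof (intro conjI)
        show "u \<le> y" using u by simp
        show "prefix q l" unfolding q_def l by (simp add: take_is_prefix)
        show "int (length l) - int (length q) \<le> int (rank P y) - int (rank P u)"
          using lq l rd' m1 m2 unfolding j_def by auto
      qed
      ultimately have "(u,q) = (x,k) \<or> (u,q) = (y,l)" using btw by blast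
      then show False using un by auto
    qed
  qed
  have "rank P y = Suc (rank P x)" using rank_cover[OF cov] .
  then have "length r \<le> 1" using rd' by simp
  then have "r = [] \<or> (\<exists>a. r = [a])" by (cases r) auto
  then have "r = [] \<or> (\<exists>a. r = [a] \<and> a \<in> {1..t})" using sl l by auto
  then show ?thesis using cov l by blast
qed

lemma rees_cover_intro:
  assumes cov: "covers P (\<le>) x y" and kR: "(x,k) \<in> R" and l: "l = k @ e"
    and e: "e = [] \<or> (\<exists>a. e = [a] \<and> a \<in> {1..t})"
  shows "(y,l) \<in> R \<and> covers R (rees_le P) (x,k) (y,l)"
proof -
  have xP: "x \<in> P" and yP: "y \<in> P" and xy: "x \<le> y" "x \<noteq> y"
    and btw: "\<forall>u\<in>P. x \<le> u \<and> u \<le> y \<longrightarrow> u = x \<or> u = y"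
    using cov unfolding covers_def by auto
  have ry: "rank P y = Suc (rank P x)" using rank_cover[OF cov] .
  have lk: "length k \<le> rank P x" "set k \<subseteq> {1..t}" using kR by (auto simp: rc_iff)
  have le: "length e \<le> 1" "set e \<subseteq> {1..t}" using e by auto
  have yR: "(y,l) \<in> R" unfolding rc_iff
    using le lk ry rank_le_n[OF yP] yP l by auto
  have le1: "rees_le P (x,k) (y,l)" unfolding rees_le_iff using xy l le ry by auto
  have "covers R (rees_le P) (x,k) (y,l)"
    unfolding covers_def
  proof (intro conjI ballI impI kR yR le1)
    show "(x,k) \<noteq> (y,l)" using xy by simp
    fix w assume wR: "w \<in> R" and w: "rees_le P (x, k) w \<and> rees_le P w (y, l)"
    obtain u q where wuq: "w = (u,q)" by fastforce
    have uP: "u \<in> P" using wR wuq by (simp add: rc_iff)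
    have h1: "x \<le> u" "prefix k q" "int (length q) - int (length k) \<le> int (rank P u) - int (rank P x)"
      and h2: "u \<le> y" "prefix q l" "int (length l) - int (length q) \<le> int (rank P y) - int (rank P u)"
      using w wuq by (auto simp: rees_le_iff)
    have "u = x \<or> u = y" using btw uP h1 h2 by blast
    then show "w = (x,k) \<or> w = (y,l)"
    proof
      assume "u = x" then show ?thesis using h1 prefix_len_eq wuq by auto
    next
      assume "u = y" then show ?thesis using h2 prefix_len_eq[of q l] wuq by auto
    qed
  qed
  then show ?thesis using yR by blast
qed

lemma rees_top_cover:
  assumes kR: "(x,k) \<in> R"
  shows "covers (hat_carrier R) (le_ext (rees_le P)) (Elem (x,k)) Top \<longleftrightarrow> (\<forall>b\<in>P. x \<le> b \<longrightarrow> b = x)"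
  unfolding cov_hat_ET
proof (intro iffI conjI ballI impI kR)
  fix b assume h: "(x, k) \<in> R \<and> (\<forall>w\<in>R. rees_le P (x, k) w \<longrightarrow> w = (x, k))" and bP: "b \<in> P" and xb: "x \<le> b"
  have xP: "x \<in> P" using kR by (simp add: rc_iff)
  have "rank P x \<le> rank P b" using rank_mono[OF xP bP xb] .
  then have "(b,k) \<in> R" using kR bP by (auto simp: rc_iff)
  moreover have "rees_le P (x,k) (b,k)" using xb \<open>rank P x \<le> rank P b\<close> by (simp add: rees_le_iff)
  ultimately show "b = x" using h by blast
next
  fix w assume h: "\<forall>b\<in>P. x \<le> b \<longrightarrow> b = x" and wR: "w \<in> R" and le: "rees_le P (x, k) w"
  obtain u q where wuq: "w = (u,q)" by fastforce
  have uP: "u \<in> P" using wR wuq by (simp add: rc_iff)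
  have h1: "x \<le> u" "prefix k q" "int (length q) - int (length k) \<le> int (rank P u) - int (rank P x)"
    using le wuq by (auto simp: rees_le_iff)
  then have "u = x" using h uP by blast
  then show "w = (x,k)" using h1 prefix_len_eq wuq by auto
qed

end



fun unE :: "'a ext \<Rightarrow> 'a" where "unE (Elem x) = x"

definition sq :: "(nat \<Rightarrow> nat) \<Rightarrow> nat \<Rightarrow> nat list" where
  "sq d i = filter (\<lambda>v. v \<noteq> 0) (map d [0..<i])"

lemma sq_0[simp]: "sq d 0 = []" by (simp add: sq_def)
lemma sq_Suc: "sq d (Suc i) = sq d i @ (if d i \<noteq> 0 then [d i] else [])"
  by (simp add: sq_def)
lemma length_sq: "length (sq d i) \<le> i"
  unfolding sq_def by (metis length_filter_le length_map length_upt minus_nat.diff_0)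
lemma set_sq: "\<forall>j<i. d j \<le> t \<Longrightarrow> set (sq d i) \<subseteq> {1..t}"
  unfolding sq_def by auto

lemma sq_Suc_strict: "strict_prefix (sq d i) (sq d (Suc i)) \<longleftrightarrow> d i \<noteq> 0"
  by (simp add: sq_Suc strict_prefix_def)

lemma labels_length: "length (labels lam c) = length c - 1"
  by (simp add: labels_def)
lemma labels_nth: "i < length c - 1 \<Longrightarrow> labels lam c ! i = lam (c!i) (c!Suc i)"
  by (simp add: labels_def)

lemma mci_dest:
  assumes "c \<in> max_chains_interval S le x y" "length c = N + 2"
  shows "c!0 = x" "c!(N+1) = y" "\<And>i. i < N+1 \<Longrightarrow> covers S le (c!i) (c!Suc i)"
proof -
  have "c \<noteq> []" using assms by auto
  then show "c!0 = x" using assms by (auto simp: max_chains_interval_def hd_conv_nth)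
  show "c!(N+1) = y" using assms \<open>c\<noteq>[]\<close> by (auto simp: max_chains_interval_def last_conv_nth)
  fix i assume "i < N+1" then show "covers S le (c!i) (c!Suc i)"
    using assms by (auto simp: max_chains_interval_def)
qed

lemma mci_intro:
  assumes "length c = N + 2" "c!0 = x" "c!(N+1) = y" "\<And>i. i < N+1 \<Longrightarrow> covers S le (c!i) (c!Suc i)"
  shows "c \<in> max_chains_interval S le x y"
proof -
  have "c \<noteq> []" using assms by auto
  then show ?thesis using assms unfolding max_chains_interval_def
    by (auto simp: hd_conv_nth last_conv_nth)
qed

lemma hat_chain_struct:
  assumes "c \<in> max_chains_interval (hat_carrier S) (le_ext le) (Elem a) Top" "length c = N + 2"
  shows "\<And>i. i \<le> N \<Longrightarrow> c!i = Elem (unE (c!i))" "c!(N+1) = Top" "unE (c!0) = a"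
    "\<And>i. i < N \<Longrightarrow> covers S le (unE (c!i)) (unE (c!Suc i))"
    "covers (hat_carrier S) (le_ext le) (Elem (unE (c!N))) Top"
proof -
  note D = mci_dest[OF assms]
  show E: "c!i = Elem (unE (c!i))" if "i \<le> N" for i
  proof -
    have "c!i \<noteq> Top" using D(3)[of i] that cov_hat_Top by fastforce
    moreover have "c!i \<noteq> Bot"
    proof (cases i)
      case 0 then show ?thesis using D(1) by simp
    next
      case (Suc j) then show ?thesis using D(3)[of j] that cov_hat_Bot by fastforce
    qed
    ultimately show ?thesis by (cases "c!i") auto
  qed
  show "c!(N+1) = Top" using D(2) .
  show "unE (c!0) = a" using D(1) by simp
  show "covers S le (unE (c!i)) (unE (c!Suc i))" if "i < N" for i
    using D(3)[of i] E[of i] E[of "Suc i"] that cov_hat_EE by (metis Suc_leI less_Suc_eq less_imp_le_nat trans_less_add1)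
  show "covers (hat_carrier S) (le_ext le) (Elem (unE (c!N))) Top"
    using D(3)[of N] E[of N] D(2) by simp
qed

locale RSL = RS P z t n m for P :: "'a::order set" and z t n m +
  fixes lamP :: "'a ext \<Rightarrow> 'a ext \<Rightarrow> 'l::order"
begin

definition build :: "'a ext list \<Rightarrow> (nat \<Rightarrow> nat) \<Rightarrow> ('a \<times> nat list) ext list" where
  "build c d = map (\<lambda>i. if i \<le> m then Elem (unE (c!i), sq d i) else Top) [0..<m+2]"

definition CP where
  "CP = {c \<in> max_chains_interval (hat_carrier P) (le_ext (\<le>)) (Elem z) Top. length c = m + 2}"

definition AA where
  "AA = {c \<in> max_chains_interval (hat_carrier (rees_carrier P t n)) (le_ext (rees_le P))
                     (Elem (z, [])) Top.
                length c = m + 2 \<and> ascent_free le_lab (labels (induced_lab lamP) c)}"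

definition Sset :: "'l list \<Rightarrow> nat \<Rightarrow> nat set" where
  "Sset w j = {v. v \<le> t \<and> (w!j \<le> w!Suc j \<longrightarrow> v \<noteq> 0) \<and> (0 < j \<and> w!(j-1) \<le> w!j \<longrightarrow> v = 0)}"

definition Sig where
  "Sig = Sigma CP (\<lambda>c. PiE {0..<m} (Sset (labels lamP c)))"

lemma build_length[simp]: "length (build c d) = m + 2" by (simp add: build_def)
lemma build_nth: "i \<le> m \<Longrightarrow> build c d ! i = Elem (unE (c!i), sq d i)"
  by (simp add: build_def nth_append del: upt_Suc)
lemma build_nth_top: "build c d ! (m+1) = Top"
  by (simp add: build_def nth_append del: upt_Suc)

lemma build_labels:
  assumes "length c = m + 2" "\<And>i. i \<le> m \<Longrightarrow> c!i = Elem (unE (c!i))" "c!(m+1) = Top" "i < m + 1"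
  shows "labels (induced_lab lamP) (build c d) ! i = (labels lamP c ! i, i < m \<and> d i \<noteq> 0)"
proof (cases "i < m")
  case True
  then show ?thesis using assms
    by (simp add: labels_nth build_nth sq_Suc_strict del: sq_Suc)
next
  case False
  then have "i = m" using assms by simp
  then show ?thesis using assms build_nth build_nth_top
    by (simp add: labels_nth)
qed

lemma af_iff:
  assumes "length L = m + 1" "\<And>i. i < m + 1 \<Longrightarrow> L ! i = (w ! i, i < m \<and> d i \<noteq> 0)"
  shows "ascent_free le_lab L \<longleftrightarrow> (\<forall>i<m. w!i \<le> w!Suc i \<longrightarrow> d i \<noteq> 0 \<and> \<not> (Suc i < m \<and> d (Suc i) \<noteq> 0))"
proof -
  have key: "\<And>i. i < m \<Longrightarrow> le_lab (L!i) (L!Suc i) \<longleftrightarrow> (w!i \<le> w!Suc i \<and> (d i \<noteq> 0 \<longrightarrow> Suc i < m \<and> d (Suc i) \<noteq> 0))"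
    using assms(2) by (simp add: le_lab_def le_bool_def)
  have "ascent_free le_lab L \<longleftrightarrow> (\<forall>i<m. \<not> le_lab (L!i) (L!Suc i))"
    unfolding ascent_free_def using assms(1) by simp
  also have "\<dots> \<longleftrightarrow> (\<forall>i<m. w!i \<le> w!Suc i \<longrightarrow> d i \<noteq> 0 \<and> \<not> (Suc i < m \<and> d (Suc i) \<noteq> 0))"
    using key by blast
  finally show ?thesis .
qed

lemma af_Sset:
  assumes "\<forall>j<m. d j \<le> t"
  shows "(\<forall>i<m. w!i \<le> w!Suc i \<longrightarrow> d i \<noteq> 0 \<and> \<not> (Suc i < m \<and> d (Suc i) \<noteq> 0))
     \<longleftrightarrow> (\<forall>j<m. d j \<in> Sset w j)"
proof
  assume h: "\<forall>i<m. w!i \<le> w!Suc i \<longrightarrow> d i \<noteq> 0 \<and> \<not> (Suc i < m \<and> d (Suc i) \<noteq> 0)"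
  show "\<forall>j<m. d j \<in> Sset w j"
  proof (intro allI impI)
    fix j assume j: "j < m"
    have "0 < j \<and> w!(j-1) \<le> w!j \<longrightarrow> d j = 0"
      using h[rule_format, of "j-1"] j by (cases j) auto
    moreover have "w!j \<le> w!Suc j \<longrightarrow> d j \<noteq> 0" using h j by blast
    moreover have "d j \<le> t" using assms j by blast
    ultimately show "d j \<in> Sset w j" unfolding Sset_def by blast
  qed
next
  assume h: "\<forall>j<m. d j \<in> Sset w j"
  show "\<forall>i<m. w!i \<le> w!Suc i \<longrightarrow> d i \<noteq> 0 \<and> \<not> (Suc i < m \<and> d (Suc i) \<noteq> 0)"
  proof (intro allI impI)
    fix i assume i: "i < m" "w!i \<le> w!Suc i"
    have "d i \<in> Sset w i" using h i by blast
    then have "d i \<noteq> 0" using i unfolding Sset_def by simp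
    moreover have "Suc i < m \<longrightarrow> d (Suc i) \<in> Sset w (Suc i)" using h by blast
    then have "Suc i < m \<longrightarrow> d (Suc i) = 0" using i unfolding Sset_def by simp
    ultimately show "d i \<noteq> 0 \<and> \<not> (Suc i < m \<and> d (Suc i) \<noteq> 0)" by simp
  qed
qed

end



context RSL begin

lemma build_in_AA:
  assumes cCP: "c \<in> CP" and dP: "d \<in> PiE {0..<m} (Sset (labels lamP c))"
  shows "build c d \<in> AA"
proof -
  have cm: "c \<in> max_chains_interval (hat_carrier P) (le_ext (\<le>)) (Elem z) Top" and lc: "length c = m + 2"
    using cCP by (auto simp: CP_def)
  note H = hat_chain_struct[OF cm lc]
  define x where "x i = unE (c!i)" for i
  have cov: "\<And>i. i < m \<Longrightarrow> covers P (\<le>) (x i) (x (Suc i))" using H(4) unfolding x_def by blast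
  have top: "x m \<in> P" "\<forall>b\<in>P. x m \<le> b \<longrightarrow> b = x m" using H(5) unfolding x_def cov_hat_ET by auto
  have x0: "x 0 = z" using H(3) unfolding x_def .
  have xP: "x i \<in> P" if "i \<le> m" for i
  proof (cases "i < m")
    case True then show ?thesis using cov[OF True] unfolding covers_def by blast
  next
    case False then show ?thesis using that top by (metis le_antisym not_less)
  qed
  have rk: "i \<le> rank P (x i)" if "i \<le> m" for i
    using that
  proof (induction i)
    case 0 then show ?case by simp
  next
    case (Suc i) then show ?case using rank_cover[OF cov[of i]] by simp
  qed
  have dt: "\<forall>j<m. d j \<le> t" using dP unfolding Sset_def by (auto simp: PiE_iff)
  have inR: "(x i, sq d i) \<in> R" if "i \<le> m" for i
    unfolding rc_iff
  proof (intro conjI)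
    show "x i \<in> P" using xP[OF that] .
    show "set (sq d i) \<subseteq> {1..t}" using dt that by (intro set_sq) auto
    show "length (sq d i) \<le> rank P (x i)" using length_sq[of d i] rk[OF that] by linarith
    then show "length (sq d i) \<le> n" using rank_le_n[OF xP[OF that]] by linarith
  qed
  have bn: "build c d ! i = Elem (x i, sq d i)" if "i \<le> m" for i
    using build_nth[OF that] unfolding x_def .
  have mci: "build c d \<in> max_chains_interval (hat_carrier R) (le_ext (rees_le P)) (Elem (z, [])) Top"
  proof (rule mci_intro[where N = m])
    show "length (build c d) = m + 2" by simp
    show "build c d ! 0 = Elem (z, [])" using bn[of 0] x0 by simp
    show "build c d ! (m + 1) = Top" by (rule build_nth_top)
    fix i assume i: "i < m + 1"
    show "covers (hat_carrier R) (le_ext (rees_le P)) (build c d ! i) (build c d ! Suc i)"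
    proof (cases "i < m")
      case True
      define e where "e = (if d i \<noteq> 0 then [d i] else [])"
      have e: "e = [] \<or> (\<exists>a. e = [a] \<and> a \<in> {1..t})" using dt True unfolding e_def by auto
      have "covers R (rees_le P) (x i, sq d i) (x (Suc i), sq d (Suc i))"
        using rees_cover_intro[OF cov[OF True] inR[of i] _ e] True sq_Suc[of d i] unfolding e_def by auto
      then show ?thesis using bn[of i] bn[of "Suc i"] True by (simp add: cov_hat_EE)
    next
      case False
      then have "i = m" using i by simp
      then show ?thesis using bn[of m] build_nth_top[of c d] rees_top_cover[OF inR[of m]] top(2) by simp
    qed
  qed
  have lab: "labels (induced_lab lamP) (build c d) ! i = (labels lamP c ! i, i < m \<and> d i \<noteq> 0)"
    if "i < m + 1" for i
    using build_labels[OF lc H(1) H(2) that] by simp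
  have "ascent_free le_lab (labels (induced_lab lamP) (build c d))
        \<longleftrightarrow> (\<forall>j<m. d j \<in> Sset (labels lamP c) j)"
    using af_iff[of "labels (induced_lab lamP) (build c d)" "labels lamP c" d] lab af_Sset[OF dt]
    by (simp add: labels_length)
  moreover have "\<forall>j<m. d j \<in> Sset (labels lamP c) j" using dP by (auto simp: PiE_iff)
  ultimately show ?thesis using mci unfolding AA_def by simp
qed

lemma sq_inj_step:
  assumes "sq d i = sq d' i" "sq d (Suc i) = sq d' (Suc i)"
  shows "d i = d' i"
  using assms by (auto simp: sq_Suc split: if_splits)

lemma build_inj: "inj_on (\<lambda>(c,d). build c d) Sig"
proof (rule inj_onI, clarify)
  fix c d c' d' assume s1: "(c,d) \<in> Sig" and s2: "(c',d') \<in> Sig" and eq: "build c d = build c' d'"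
  have cm: "c \<in> max_chains_interval (hat_carrier P) (le_ext (\<le>)) (Elem z) Top" "length c = m + 2"
   and cm': "c' \<in> max_chains_interval (hat_carrier P) (le_ext (\<le>)) (Elem z) Top" "length c' = m + 2"
    using SigmaD1[OF s1[unfolded Sig_def]] SigmaD1[OF s2[unfolded Sig_def]] unfolding CP_def by auto
  note H = hat_chain_struct[OF cm] and H' = hat_chain_struct[OF cm']
  have e: "unE (c!i) = unE (c'!i) \<and> sq d i = sq d' i" if "i \<le> m" for i
  proof -
    have "build c d ! i = build c' d' ! i" using eq by simp
    then show ?thesis using build_nth[OF that, of c d] build_nth[OF that, of c' d'] by simp
  qed
  have "c = c'"
  proof (rule nth_equalityI)
    show "length c = length c'" using cm cm' by simp
    fix i assume "i < length c"
    then have "i \<le> m \<or> i = m + 1" using cm by auto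
    then show "c!i = c'!i"
    proof
      assume i: "i \<le> m"
      have "c!i = Elem (unE (c!i))" using H(1)[OF i] .
      also have "\<dots> = Elem (unE (c'!i))" using e[OF i] by simp
      also have "\<dots> = c'!i" by (rule sym[OF H'(1)[OF i]])
      finally show ?thesis .
    qed (use H(2) H'(2) in simp)
  qed
  moreover have "d = d'"
  proof
    fix j show "d j = d' j"
    proof (cases "j < m")
      case True then show ?thesis using e[of j] e[of "Suc j"] sq_inj_step by simp
    next
      case False
      have "d \<in> PiE {0..<m} (Sset (labels lamP c))" "d' \<in> PiE {0..<m} (Sset (labels lamP c'))"
        using SigmaD2[OF s1[unfolded Sig_def]] SigmaD2[OF s2[unfolded Sig_def]] by auto
      then show ?thesis using False by (metis PiE_arb atLeastLessThan_iff)
    qed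
  qed
  ultimately show "c = c' \<and> d = d'" by simp
qed

lemma build_surj: "AA \<subseteq> (\<lambda>(c,d). build c d) ` Sig"
proof
  fix c' assume cA: "c' \<in> AA"
  have cm: "c' \<in> max_chains_interval (hat_carrier R) (le_ext (rees_le P)) (Elem (z,[])) Top"
    and lc: "length c' = m + 2" and af: "ascent_free le_lab (labels (induced_lab lamP) c')"
    using cA by (auto simp: AA_def)
  note H = hat_chain_struct[OF cm lc]
  define x where "x i = fst (unE (c'!i))" for i
  define s where "s i = snd (unE (c'!i))" for i
  have y: "unE (c'!i) = (x i, s i)" for i unfolding x_def s_def by simp
  have cov: "covers R (rees_le P) (x i, s i) (x (Suc i), s (Suc i))" if "i < m" for i
    using H(4)[OF that] unfolding y .
  have top: "covers (hat_carrier R) (le_ext (rees_le P)) (Elem (x m, s m)) Top"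
    using H(5) unfolding y .
  have mR: "(x m, s m) \<in> R" using top by (simp add: cov_hat_ET)
  have x0: "x 0 = z" "s 0 = []" using H(3) unfolding x_def s_def by simp_all
  have ch: "covers P (\<le>) (x i) (x (Suc i)) \<and> (\<exists>e. s (Suc i) = s i @ e \<and> (e = [] \<or> (\<exists>a. e = [a] \<and> a \<in> {1..t})))"
    if "i < m" for i using rees_cover_char[OF cov[OF that]] .
  define c where "c = map (\<lambda>i. if i \<le> m then Elem (x i) else Top) [0..<m+2]"
  define d where "d j = (if j < m then (if s (Suc j) = s j then 0 else last (s (Suc j))) else undefined)" for j
  have cn: "c!i = Elem (x i)" if "i \<le> m" for i
    using that unfolding c_def by (simp add: nth_append del: upt_Suc)
  have cnt: "c!(m+1) = Top" unfolding c_def by (simp add: nth_append del: upt_Suc)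
  have lcc: "length c = m + 2" unfolding c_def by simp
  have dstep: "d j \<le> t \<and> s (Suc j) = s j @ (if d j \<noteq> 0 then [d j] else [])" if jm: "j < m" for j
  proof -
    obtain e where e: "s (Suc j) = s j @ e" "e = [] \<or> (\<exists>a. e = [a] \<and> a \<in> {1..t})" using ch[OF jm] by blast
    from e(2) show ?thesis
    proof
      assume "e = []" then show ?thesis using e(1) jm unfolding d_def by simp
    next
      assume "\<exists>a. e = [a] \<and> a \<in> {1..t}"
      then obtain a where "e = [a]" "a \<in> {1..t}" by blast
      then show ?thesis using e(1) jm unfolding d_def by simp
    qed
  qed
  have dt: "\<forall>j<m. d j \<le> t" using dstep by blast
  have ssq: "s i = sq d i" if "i \<le> m" for i
    using that
  proof (induction i)
    case 0 then show ?case using x0 by simp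
  next
    case (Suc i) then show ?case using dstep[of i] by (simp add: sq_Suc)
  qed
  have cCP: "c \<in> CP"
    unfolding CP_def
  proof (intro CollectI conjI lcc)
    show "c \<in> max_chains_interval (hat_carrier P) (le_ext (\<le>)) (Elem z) Top"
    proof (rule mci_intro[where N = m])
      show "length c = m + 2" by (rule lcc)
      show "c!0 = Elem z" using cn[of 0] x0 by simp
      show "c!(m+1) = Top" by (rule cnt)
      fix i assume i: "i < m + 1"
      show "covers (hat_carrier P) (le_ext (\<le>)) (c ! i) (c ! Suc i)"
      proof (cases "i < m")
        case True then show ?thesis using ch[OF True] cn[of i] cn[of "Suc i"] by (simp add: cov_hat_EE)
      next
        case False
        then have im: "i = m" using i by simp
        have "x m \<in> P" using mR by (simp add: rc_iff)
        then show ?thesis using im cn[of m] cnt rees_top_cover[OF mR] top by (simp add: cov_hat_ET)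
      qed
    qed
  qed
  have bc: "build c d = c'"
  proof (rule nth_equalityI)
    show "length (build c d) = length c'" using lc by simp
    fix i assume "i < length (build c d)"
    then have "i \<le> m \<or> i = m + 1" by auto
    then show "build c d ! i = c' ! i"
    proof
      assume im: "i \<le> m"
      have "build c d ! i = Elem (x i, s i)" using build_nth[OF im, of c d] cn[OF im] ssq[OF im] by simp
      also have "\<dots> = Elem (unE (c'!i))" using y[of i] by simp
      also have "\<dots> = c'!i" by (rule sym[OF H(1)[OF im]])
      finally show ?thesis .
    qed (use build_nth_top[of c d] H(2) in simp)
  qed
  have lab: "labels (induced_lab lamP) (build c d) ! i = (labels lamP c ! i, i < m \<and> d i \<noteq> 0)"
    if "i < m + 1" for i
  proof -
    have "\<And>i. i \<le> m \<Longrightarrow> c!i = Elem (unE (c!i))" using cn by simp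
    from build_labels[OF lcc this cnt that] show ?thesis .
  qed
  have "ascent_free le_lab (labels (induced_lab lamP) (build c d))
        \<longleftrightarrow> (\<forall>j<m. d j \<in> Sset (labels lamP c) j)"
    using af_iff[of "labels (induced_lab lamP) (build c d)" "labels lamP c" d] lab af_Sset[OF dt]
    by (simp add: labels_length)
  then have "\<forall>j<m. d j \<in> Sset (labels lamP c) j" using af bc by simp
  moreover have "d \<in> extensional {0..<m}" by (simp add: extensional_def d_def)
  ultimately have "d \<in> PiE {0..<m} (Sset (labels lamP c))" by (simp add: PiE_iff)
  then have "(c,d) \<in> Sig" using cCP unfolding Sig_def by simp
  then show "c' \<in> (\<lambda>(c,d). build c d) ` Sig" by (rule image_eqI[rotated]) (simp add: bc)
qed

lemma card_AA: "card AA = card Sig"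
proof -
  have "(\<lambda>(c,d). build c d) ` Sig \<subseteq> AA"
  proof clarify
    fix c d assume "(c,d) \<in> Sig" then show "build c d \<in> AA" using build_in_AA by (simp add: Sig_def)
  qed
  then have "AA = (\<lambda>(c,d). build c d) ` Sig" using build_surj by (rule equalityI[rotated])
  then show ?thesis using card_image[OF build_inj] by simp
qed

end



context RSL begin

lemma card_Sset:
  "card (Sset w j) = (if (w!j \<le> w!Suc j) \<and> (0 < j \<and> w!(j-1) \<le> w!j) then 0
     else if w!j \<le> w!Suc j then t else if (0 < j \<and> w!(j-1) \<le> w!j) then 1 else t + 1)"
proof -
  have e1: "{v. v \<le> t \<and> v \<noteq> 0} = {1..t}" "{v. v \<le> t \<and> 0 < v} = {1..t}" by auto
  have e2: "{v::nat. v \<le> t \<and> v = 0} = {0}" by auto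
  show ?thesis unfolding Sset_def by (auto simp: e1 e2)
qed

lemma F_eq:
  assumes lw: "length w = m + 1"
  shows "(\<Prod>j\<in>{0..<m}. card (Sset w j)) =
     (if w \<in> NDA (m + 1) \<and> \<not> (0 < m \<and> w ! (m - 1) \<le> w ! m)
            then t ^ asc w * (1 + t) ^ (m - 2 * asc w) else 0)
    + (if w \<in> NDA (m + 1) \<and> (0 < m \<and> w ! (m - 1) \<le> w ! m)
            then t ^ asc w * (1 + t) ^ (m + 1 - 2 * asc w) else 0)"
proof -
  define a where "a j \<longleftrightarrow> w!j \<le> w!Suc j" for j
  define b where "b j \<longleftrightarrow> 0 < j \<and> a (j - 1)" for j
  have cS: "card (Sset w j) = (if a j \<and> b j then 0 else if a j then t else if b j then 1 else t + 1)" for j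
    unfolding card_Sset a_def b_def by simp
  define L where "L \<longleftrightarrow> 0 < m \<and> w ! (m - 1) \<le> w ! m"
  have La: "L \<longleftrightarrow> 0 < m \<and> a (m - 1)" unfolding L_def a_def by (cases m) auto
  have NDA_iff: "w \<in> NDA (m + 1) \<longleftrightarrow> \<not> (\<exists>j<m. a j \<and> b j)"
  proof -
    have "w \<in> NDA (m + 1) \<longleftrightarrow> \<not> (\<exists>i. i + 2 < m + 1 \<and> a i \<and> a (Suc i))"
      unfolding NDA_def a_def using lw by (simp add: numeral_2_eq_2)
    also have "\<dots> \<longleftrightarrow> \<not> (\<exists>j<m. a j \<and> b j)"
    proof
      assume h: "\<not> (\<exists>i. i + 2 < m + 1 \<and> a i \<and> a (Suc i))"
      show "\<not> (\<exists>j<m. a j \<and> b j)"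
      proof
        assume "\<exists>j<m. a j \<and> b j"
        then obtain j where "j < m" "a j" "0 < j" "a (j - 1)" unfolding b_def by blast
        then show False using h[simplified, rule_format, of "j - 1"] by (cases j) auto
      qed
    next
      assume h: "\<not> (\<exists>j<m. a j \<and> b j)"
      show "\<not> (\<exists>i. i + 2 < m + 1 \<and> a i \<and> a (Suc i))"
      proof
        assume "\<exists>i. i + 2 < m + 1 \<and> a i \<and> a (Suc i)"
        then obtain i where "i + 2 < m + 1" "a i" "a (Suc i)" by blast
        then show False using h unfolding b_def by auto
      qed
    qed
    finally show ?thesis .
  qed
  have asc_eq: "asc w = card {j\<in>{0..<m}. a j}"
    unfolding asc_def a_def using lw by (intro arg_cong[where f = card]) auto
  show ?thesis
  proof (cases "w \<in> NDA (m + 1)")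
    case False
    then obtain j where j: "j < m" "a j" "b j" using NDA_iff by blast
    have "(\<Prod>j\<in>{0..<m}. card (Sset w j)) = 0"
      using j by (subst prod_zero_iff) (auto simp: cS intro!: bexI[of _ j])
    then show ?thesis using False by simp
  next
    case True
    then have nab: "\<And>j. j < m \<Longrightarrow> \<not> (a j \<and> b j)" using NDA_iff by blast
    define fr where "fr j \<longleftrightarrow> \<not> a j \<and> \<not> b j" for j
    have "(\<Prod>j\<in>{0..<m}. card (Sset w j))
        = (\<Prod>j\<in>{0..<m}. t ^ (if a j then 1 else 0) * (1 + t) ^ (if fr j then 1 else 0))"
      by (rule prod.cong) (auto simp: cS fr_def dest: nab)
    also have "\<dots> = t ^ (\<Sum>j\<in>{0..<m}. if a j then 1 else 0) * (1 + t) ^ (\<Sum>j\<in>{0..<m}. if fr j then 1 else 0)"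
      by (simp add: prod.distrib power_sum)
    also have "(\<Sum>j\<in>{0..<m}. if a j then 1 else 0) = card {j\<in>{0..<m}. a j}"
      by (simp add: sum.If_cases Int_def)
    also have "(\<Sum>j\<in>{0..<m}. if fr j then 1 else (0::nat)) = card {j\<in>{0..<m}. fr j}"
      by (simp add: sum.If_cases Int_def)
    finally have pe: "(\<Prod>j\<in>{0..<m}. card (Sset w j)) = t ^ asc w * (1 + t) ^ card {j\<in>{0..<m}. fr j}"
      using asc_eq by simp
    define AS where "AS = {j\<in>{0..<m}. a j}"
    define BS where "BS = {j\<in>{0..<m}. b j}"
    have part: "{0..<m} = AS \<union> BS \<union> {j\<in>{0..<m}. fr j}" unfolding AS_def BS_def fr_def by auto
    have disj: "AS \<inter> BS = {}" unfolding AS_def BS_def using nab by auto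
    have cfr: "card {j\<in>{0..<m}. fr j} = m - card AS - card BS"
    proof -
      have "m = card (AS \<union> BS \<union> {j\<in>{0..<m}. fr j})" using part by (metis card_atLeastLessThan minus_nat.diff_0)
      also have "\<dots> = card AS + card BS + card {j\<in>{0..<m}. fr j}"
        using disj by (subst card_Un_disjoint; auto simp: AS_def BS_def fr_def)+
      finally show ?thesis by simp
    qed
    have BS_eq: "BS = Suc ` {i. i + 1 < m \<and> a i}"
      unfolding BS_def b_def
    proof (rule set_eqI)
      fix x show "x \<in> {j\<in>{0..<m}. 0 < j \<and> a (j - 1)} \<longleftrightarrow> x \<in> Suc ` {i. i + 1 < m \<and> a i}"
        by (cases x) auto
    qed
    have cBS: "card BS = card {i. i + 1 < m \<and> a i}" unfolding BS_eq by (simp add: card_image)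
    have cAS: "card AS = card {i. i + 1 < m \<and> a i} + (if L then 1 else 0)"
    proof (cases L)
      case True
      then have "AS = insert (m - 1) {i. i + 1 < m \<and> a i}" "m - 1 \<notin> {i. i + 1 < m \<and> a i}"
        unfolding AS_def La by auto
      moreover have "finite {i. i + 1 < m \<and> a i}" by (rule finite_subset[of _ "{..<m}"]) auto
      ultimately show ?thesis using True by simp
    next
      case False
      have aux: "x + 1 < m" if "x < m" "a x" for x
      proof (cases "x + 1 = m")
        case True then have "m - 1 = x" "0 < m" by auto
        then show ?thesis using False that unfolding La by simp
      qed (use that in simp)
      then have "AS = {i. i + 1 < m \<and> a i}" unfolding AS_def by auto
      then show ?thesis using False by simp
    qed
    have ascAS: "asc w = card AS" unfolding AS_def asc_eq ..
    show ?thesis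
    proof (cases L)
      case True
      then have "card {j\<in>{0..<m}. fr j} = m + 1 - 2 * asc w"
        using cfr cBS cAS ascAS by simp
      then show ?thesis using pe True \<open>w \<in> NDA (m + 1)\<close> unfolding L_def by simp
    next
      case False
      then have "card {j\<in>{0..<m}. fr j} = m - 2 * asc w"
        using cfr cBS cAS ascAS by simp
      then show ?thesis using pe False \<open>w \<in> NDA (m + 1)\<close> unfolding L_def by auto
    qed
  qed
qed

end



context RSL begin

lemma finite_CP: "finite CP"
proof -
  have "CP \<subseteq> {c. set c \<subseteq> hat_carrier P \<and> length c = m + 2}"
  proof clarify
    fix c assume cCP: "c \<in> CP"
    have cm: "c \<in> max_chains_interval (hat_carrier P) (le_ext (\<le>)) (Elem z) Top" and lc: "length c = m + 2"
      using cCP by (auto simp: CP_def)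
    note D = mci_dest[OF cm lc]
    have "c!i \<in> hat_carrier P" if "i < m + 2" for i
    proof (cases "i < m + 1")
      case True then show ?thesis using D(3)[OF True] unfolding covers_def by blast
    next
      case False then have "i = Suc m" using that by simp
      then show ?thesis using D(3)[of m] unfolding covers_def by simp
    qed
    then show "set c \<subseteq> hat_carrier P \<and> length c = m + 2" using lc by (auto simp: in_set_conv_nth)
  qed
  moreover have "finite (hat_carrier P)" unfolding hat_carrier_def using finP by simp
  ultimately show ?thesis using finite_lists_length_eq finite_subset by blast
qed

lemma card_Sig: "card Sig = (\<Sum>c\<in>CP. \<Prod>j\<in>{0..<m}. card (Sset (labels lamP c) j))"
proof -
  have "finite (Sset w j)" for w j unfolding Sset_def by (rule finite_subset[of _ "{..t}"]) auto
  then have "card Sig = (\<Sum>c\<in>CP. card (PiE {0..<m} (Sset (labels lamP c))))"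
    unfolding Sig_def using finite_CP by (intro card_SigmaI) (auto intro: finite_PiE)
  also have "\<dots> = (\<Sum>c\<in>CP. \<Prod>j\<in>{0..<m}. card (Sset (labels lamP c) j))"
    by (simp add: card_PiE)
  finally show ?thesis .
qed

lemma cc_eq: "chain_count P z lamP (m + 1) w = card {c \<in> CP. labels lamP c = w}"
  unfolding chain_count_def CP_def by (rule arg_cong[where f = card]) auto

lemma main:
  "card AA =
    (\<Sum>w. if w \<in> NDA (m + 1) \<and> \<not> (0 < m \<and> w ! (m - 1) \<le> w ! m)
            then chain_count P z lamP (m + 1) w * t ^ asc w * (1 + t) ^ (m - 2 * asc w) else 0)
    + (\<Sum>w. if w \<in> NDA (m + 1) \<and> (0 < m \<and> w ! (m - 1) \<le> w ! m)
            then chain_count P z lamP (m + 1) w * t ^ asc w * (1 + t) ^ (m + 1 - 2 * asc w) else 0)"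
  (is "_ = Sum_any ?g1 + Sum_any ?g2")
proof -
  define G where "G w = (\<Prod>j\<in>{0..<m}. card (Sset w j))" for w
  define W where "W = labels lamP ` CP"
  have fW: "finite W" unfolding W_def using finite_CP by simp
  have lW: "length w = m + 1" if "w \<in> W" for w
    using that unfolding W_def CP_def by (auto simp: labels_length)
  have "card AA = (\<Sum>c\<in>CP. G (labels lamP c))" unfolding card_AA card_Sig G_def ..
  also have "\<dots> = (\<Sum>w\<in>W. \<Sum>c\<in>{c \<in> CP. labels lamP c = w}. G (labels lamP c))"
    by (rule sum.group[symmetric, OF finite_CP fW]) (simp add: W_def)
  also have "\<dots> = (\<Sum>w\<in>W. chain_count P z lamP (m + 1) w * G w)"
    unfolding cc_eq by (rule sum.cong) simp_all
  also have "\<dots> = (\<Sum>w\<in>W. ?g1 w + ?g2 w)"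
  proof (rule sum.cong)
    fix w assume "w \<in> W"
    then show "chain_count P z lamP (m + 1) w * G w = ?g1 w + ?g2 w"
      unfolding G_def F_eq[OF lW[OF \<open>w \<in> W\<close>]] by (simp add: algebra_simps)
  qed simp
  also have "\<dots> = sum ?g1 W + sum ?g2 W" by (rule sum.distrib)
  also have "sum ?g1 W = Sum_any ?g1"
  proof (rule Sum_any.expand_superset[symmetric, OF fW], rule subsetI)
    fix w assume "w \<in> {a. ?g1 a \<noteq> 0}"
    then have "?g1 w \<noteq> 0" by simp
    then have "card {c \<in> CP. labels lamP c = w} \<noteq> 0" unfolding cc_eq by (auto split: if_splits)
    then have "{c \<in> CP. labels lamP c = w} \<noteq> {}" by (metis card.empty)
    then obtain c where "c \<in> CP" "labels lamP c = w" by blast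
    then show "w \<in> W" unfolding W_def by blast
  qed
  also have "sum ?g2 W = Sum_any ?g2"
  proof (rule Sum_any.expand_superset[symmetric, OF fW], rule subsetI)
    fix w assume "w \<in> {a. ?g2 a \<noteq> 0}"
    then have "?g2 w \<noteq> 0" by simp
    then have "card {c \<in> CP. labels lamP c = w} \<noteq> 0" unfolding cc_eq by (auto split: if_splits)
    then have "{c \<in> CP. labels lamP c = w} \<noteq> {}" by (metis card.empty)
    then obtain c where "c \<in> CP" "labels lamP c = w" by blast
    then show "w \<in> W" unfolding W_def by blast
  qed
  finally show ?thesis .
qed

end

theorem theorem3p6:
  fixes P :: "'a::order set" and z :: 'a and n t m :: nat
    and lamP :: "'a ext \<Rightarrow> 'a ext \<Rightarrow> 'l::order"
  assumes "finite P" and "semipure P"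
    and "z \<in> P" and "\<forall>x\<in>P. z \<le> x"
    and "n = poset_length P"
    and "t \<ge> 1"
    and "EL_labeling (hat_carrier P) (le_ext (\<le>)) lamP"
  shows "card {c \<in> max_chains_interval (hat_carrier (rees_carrier P t n)) (le_ext (rees_le P))
                     (Elem (z, [])) Top.
                length c = m + 2 \<and> ascent_free le_lab (labels (induced_lab lamP) c)}
    = (\<Sum>w. if w \<in> NDA (m + 1) \<and> \<not> (0 < m \<and> w ! (m - 1) \<le> w ! m)
            then chain_count P z lamP (m + 1) w * t ^ asc w * (1 + t) ^ (m - 2 * asc w) else 0)
    + (\<Sum>w. if w \<in> NDA (m + 1) \<and> (0 < m \<and> w ! (m - 1) \<le> w ! m)
            then chain_count P z lamP (m + 1) w * t ^ asc w * (1 + t) ^ (m + 1 - 2 * asc w) else 0)"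
proof -
  interpret RSL P z t n m lamP
    by unfold_locales (use assms in auto)
  show ?thesis using main unfolding AA_def .
qed



end
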